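(* Let $\theta^*\in\mathbb{R}^n$, let $\phi_1,\dots,\phi_N\in\mathbb{R}^n$ with $[\phi_1,\dots,\phi_N]$ of rank $n$, and $y_k:=\phi_k^T\theta^*$. For any $\beta>0$, $\gamma>0$ and $\mu\ge0$, with $$B(\theta,\mu):=\sum_{k=1}^N\frac{\phi_k}{1+\mu\phi_k^T\phi_k}\big(\phi_k^T\theta-y_k\big),$$ the point $(\theta^*,\theta^* )$ is uniformly globally asymptotically stable for the system in $(\theta,\vartheta)\in\mathbb{R}^{2n}$ $$\dot\theta=-\beta(\theta-\vartheta),\qquad\dot\vartheta=-\gamma B(\theta,\mu).$$
   Context: In the paper $\phi_k=\phi(t_k)$, $y_k=y^*(t_k)$ are recorded data samples. UGAS: uniformly globally stable (there is class-$\mathcal{K}_\infty$ $\kappa$ with $|x(t)-x^*|\le\kappa(|x_\circ-x^*|)$ for $t\ge t_\circ$) and uniformly globally attractive (for each $r,\sigma>0$ there is $T'>0$ with $|x_\circ-x^*|\le r\Rightarrow |x(t)-x^*|\le\sigma$ for $t\ge t_\circ+T'$). *)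

theory Defs
  imports "HOL-Analysis.Analysis"
begin

definition class_K_inf :: "(real \<Rightarrow> real) \<Rightarrow> bool" where
  "class_K_inf \<kappa> \<longleftrightarrow> continuous_on {0..} \<kappa> \<and> strict_mono_on {0..} \<kappa> \<and> \<kappa> 0 = 0
      \<and> filterlim \<kappa> at_top at_top"

definition is_solution ::
  "(real \<Rightarrow> 'a::real_normed_vector \<Rightarrow> 'a) \<Rightarrow> real \<Rightarrow> 'a \<Rightarrow> (real \<Rightarrow> 'a) \<Rightarrow> bool" where
  "is_solution f t0 x0 x \<longleftrightarrow> x t0 = x0 \<and>
     (\<forall>t\<ge>t0. (x has_vector_derivative f t (x t)) (at t within {t0..}))"

definition UGAS :: "(real \<Rightarrow> 'a::real_normed_vector \<Rightarrow> 'a) \<Rightarrow> 'a \<Rightarrow> bool" where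
  "UGAS f xs \<longleftrightarrow>
     (\<exists>\<kappa>. class_K_inf \<kappa> \<and>
        (\<forall>t0 x0 x. is_solution f t0 x0 x \<longrightarrow>
           (\<forall>t\<ge>t0. norm (x t - xs) \<le> \<kappa> (norm (x0 - xs))))) \<and>
     (\<forall>r>0. \<forall>\<sigma>>0. \<exists>T'>0. \<forall>t0 x0 x. is_solution f t0 x0 x \<longrightarrow> norm (x0 - xs) \<le> r \<longrightarrow>
           (\<forall>t\<ge>t0 + T'. norm (x t - xs) \<le> \<sigma>))"

definition Bfun :: "(nat \<Rightarrow> real^'n) \<Rightarrow> nat \<Rightarrow> real^'n \<Rightarrow> real^'n \<Rightarrow> real \<Rightarrow> real^'n" where
  "Bfun \<phi> N \<theta>s \<theta> \<mu> =
     (\<Sum>k=1..N. ((\<phi> k \<bullet> \<theta> - \<phi> k \<bullet> \<theta>s) / (1 + \<mu> * (\<phi> k \<bullet> \<phi> k))) *\<^sub>R \<phi> k)"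

end

theory Submission imports Defs begin

lemma decay:
  fixes V V' :: "real \<Rightarrow> real"
  assumes d: "\<And>t. t \<ge> t0 \<Longrightarrow> (V has_real_derivative V' t) (at t within {t0..})"
    and le: "\<And>t. t \<ge> t0 \<Longrightarrow> V' t \<le> - \<alpha> * V t"
    and t: "t \<ge> t0"
  shows "V t \<le> V t0 * exp (- \<alpha> * (t - t0))"
proof -
  define g where "g s = V s * exp (\<alpha> * (s - t0))" for s
  have dg: "(g has_real_derivative (V' s * exp (\<alpha> * (s - t0)) + V s * (exp (\<alpha> * (s - t0)) * \<alpha>))) (at s within {t0..})"
    if "s \<ge> t0" for s
    unfolding g_def
    by (rule derivative_eq_intros d that refl | simp)+
  have "continuous_on {t0..} g"
    by (rule DERIV_continuous_on[OF dg]) auto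
  then have c: "continuous_on {t0..t} g" by (rule continuous_on_subset) auto
  have "g t0 \<ge> g t"
  proof (rule DERIV_nonpos_imp_decreasing_open[OF t _ c])
    fix s assume s: "t0 < s" "s < t"
    have "at s within {t0..} = at s"
      by (rule at_within_interior) (use s in auto)
    with dg[of s] s have "DERIV g s :> V' s * exp (\<alpha> * (s - t0)) + V s * (exp (\<alpha> * (s - t0)) * \<alpha>)" by auto
    moreover have "V' s * exp (\<alpha> * (s - t0)) + V s * (exp (\<alpha> * (s - t0)) * \<alpha>) \<le> 0"
    proof -
      have "V' s * exp (\<alpha> * (s - t0)) \<le> (- \<alpha> * V s) * exp (\<alpha> * (s - t0))"
        using le[of s] s by (intro mult_right_mono) auto
      then show ?thesis by (simp add: algebra_simps)
    qed
    ultimately show "\<exists>y. DERIV g s :> y \<and> y \<le> 0" by blast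
  qed
  then have "V t * exp (\<alpha> * (t - t0)) \<le> V t0" by (simp add: g_def)
  then have "V t * exp (\<alpha> * (t - t0)) * exp (- \<alpha> * (t - t0)) \<le> V t0 * exp (- \<alpha> * (t - t0))"
    by (intro mult_right_mono) auto
  then show ?thesis by (simp add: mult.assoc flip: exp_add)
qed

lemma UGAS_from_bound:
  fixes f :: "real \<Rightarrow> 'a::real_normed_vector \<Rightarrow> 'a"
  assumes C: "C > 0" and a: "\<alpha> > 0"
    and b: "\<And>t0 x0 x t. is_solution f t0 x0 x \<Longrightarrow> t \<ge> t0 \<Longrightarrow>
        norm (x t - xs) \<le> C * norm (x0 - xs) * exp (- \<alpha> * (t - t0))"
  shows "UGAS f xs"
  unfolding UGAS_def
proof (intro conjI allI impI)
  have K: "class_K_inf (\<lambda>r. C * r)"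
    unfolding class_K_inf_def
  proof (intro conjI)
    show "continuous_on {0..} (\<lambda>r. C * r)" by (intro continuous_intros)
    show "strict_mono_on {0..} (\<lambda>r. C * r)" using C by (auto simp: strict_mono_on_def)
    show "C * 0 = 0" by simp
    show "filterlim (\<lambda>r. C * r) at_top at_top"
      by (rule filterlim_tendsto_pos_mult_at_top[OF tendsto_const C filterlim_ident])
  qed
  show "\<exists>\<kappa>. class_K_inf \<kappa> \<and> (\<forall>t0 x0 x. is_solution f t0 x0 x \<longrightarrow> (\<forall>t\<ge>t0. norm (x t - xs) \<le> \<kappa> (norm (x0 - xs))))"
  proof (intro exI conjI allI impI)
    show "class_K_inf (\<lambda>r. C * r)" by (rule K)
    fix t0 x0 x t assume s: "is_solution f t0 x0 x" and t: "t0 \<le> t"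
    have "norm (x t - xs) \<le> C * norm (x0 - xs) * exp (- \<alpha> * (t - t0))" by (rule b[OF s t])
    also have "\<dots> \<le> C * norm (x0 - xs) * 1"
      using C a t by (intro mult_left_mono) (auto simp: mult_nonneg_nonneg)
    finally show "norm (x t - xs) \<le> C * norm (x0 - xs)" by simp
  qed
  fix r \<sigma> :: real assume r: "r > 0" and sg: "\<sigma> > 0"
  define T where "T = max 1 (ln (C * r / \<sigma>) / \<alpha>)"
  show "\<exists>T'>0. \<forall>t0 x0 x. is_solution f t0 x0 x \<longrightarrow> norm (x0 - xs) \<le> r \<longrightarrow> (\<forall>t\<ge>t0 + T'. norm (x t - xs) \<le> \<sigma>)"
  proof (intro exI conjI allI impI)
    show "T > 0" by (simp add: T_def)
    fix t0 x0 x t assume s: "is_solution f t0 x0 x" and n: "norm (x0 - xs) \<le> r" and t: "t0 + T \<le> t"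
    have T1: "ln (C * r / \<sigma>) \<le> \<alpha> * T" using a unfolding T_def
      by (simp add: field_simps max_def)
    have "exp (- \<alpha> * (t - t0)) \<le> exp (- \<alpha> * T)" using a t by (simp add: mult_left_mono)
    also have "\<dots> \<le> exp (- ln (C * r / \<sigma>))" using T1 by simp
    also have "\<dots> = \<sigma> / (C * r)" using C r sg by (simp add: exp_minus)
    finally have e: "exp (- \<alpha> * (t - t0)) \<le> \<sigma> / (C * r)" .
    have "norm (x t - xs) \<le> C * norm (x0 - xs) * exp (- \<alpha> * (t - t0))" 
      by (rule b[OF s]) (use t T_def in auto)
    also have "\<dots> \<le> C * r * (\<sigma> / (C * r))"
      using C n e r by (intro mult_mono) auto
    also have "\<dots> = \<sigma>" using C r by simp
    finally show "norm (x t - xs) \<le> \<sigma>" .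
  qed
qed

definition dd :: "(nat \<Rightarrow> real^'n) \<Rightarrow> real \<Rightarrow> nat \<Rightarrow> real" where
  "dd \<phi> \<mu> k = 1 + \<mu> * (\<phi> k \<bullet> \<phi> k)"

definition GG :: "(nat \<Rightarrow> real^'n) \<Rightarrow> nat \<Rightarrow> real \<Rightarrow> real^'n \<Rightarrow> real^'n" where
  "GG \<phi> N \<mu> e = (\<Sum>k=1..N. ((\<phi> k \<bullet> e) / dd \<phi> \<mu> k) *\<^sub>R \<phi> k)"

lemma dd_ge1: "\<mu> \<ge> 0 \<Longrightarrow> dd \<phi> \<mu> k \<ge> 1"
  unfolding dd_def by simp

lemma dd_pos: "\<mu> \<ge> 0 \<Longrightarrow> dd \<phi> \<mu> k > 0"
  using dd_ge1[of \<mu> \<phi> k] by linarith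

lemma dd_nz: "\<mu> \<ge> 0 \<Longrightarrow> dd \<phi> \<mu> k \<noteq> 0"
  using dd_pos[of \<mu> \<phi> k] by linarith

lemma inner_GG: "v \<bullet> GG \<phi> N \<mu> e = (\<Sum>k=1..N. (\<phi> k \<bullet> e) * (\<phi> k \<bullet> v) / dd \<phi> \<mu> k)"
  unfolding GG_def by (simp add: inner_sum_right inner_commute)

lemma Bfun_GG: "Bfun \<phi> N \<theta>s \<theta> \<mu> = GG \<phi> N \<mu> (\<theta> - \<theta>s)"
  unfolding Bfun_def GG_def dd_def by (simp add: inner_diff_right)

lemma GG_scale: "GG \<phi> N \<mu> (s *\<^sub>R e) = s *\<^sub>R GG \<phi> N \<mu> e"
  unfolding GG_def by (simp add: scaleR_sum_right)

lemma q_eq: "e \<bullet> GG \<phi> N \<mu> e = (\<Sum>k=1..N. (\<phi> k \<bullet> e)\<^sup>2 / dd \<phi> \<mu> k)"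
  by (simp add: inner_GG power2_eq_square)

lemma q_nonneg: "\<mu> \<ge> 0 \<Longrightarrow> 0 \<le> e \<bullet> GG \<phi> N \<mu> e"
  unfolding q_eq by (intro sum_nonneg divide_nonneg_pos zero_le_power2 dd_pos)

lemma q_upper: "\<mu> \<ge> 0 \<Longrightarrow> e \<bullet> GG \<phi> N \<mu> e \<le> (\<Sum>k=1..N. \<phi> k \<bullet> \<phi> k) * (e \<bullet> e)"
  unfolding q_eq sum_distrib_right
proof (intro sum_mono)
  fix k assume "\<mu> \<ge> 0"
  have d: "dd \<phi> \<mu> k \<ge> 1" using dd_ge1 \<open>\<mu> \<ge> 0\<close> .
  have "(\<phi> k \<bullet> e)\<^sup>2 / dd \<phi> \<mu> k \<le> (\<phi> k \<bullet> e)\<^sup>2"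
    using d by (simp add: divide_le_eq mult_le_cancel_left1 )
  also have "\<dots> \<le> \<phi> k \<bullet> \<phi> k * (e \<bullet> e)" by (rule Cauchy_Schwarz_ineq)
  finally show "(\<phi> k \<bullet> e)\<^sup>2 / dd \<phi> \<mu> k \<le> \<phi> k \<bullet> \<phi> k * (e \<bullet> e)" .
qed

lemma q_pos:
  assumes sp: "span (\<phi> ` {1..N}) = UNIV" and mu: "\<mu> \<ge> 0" and e: "e \<noteq> 0"
  shows "0 < e \<bullet> GG \<phi> N \<mu> e"
proof (rule ccontr)
  assume "\<not> 0 < e \<bullet> GG \<phi> N \<mu> e"
  with q_nonneg[OF mu, of e \<phi> N] have "(\<Sum>k=1..N. (\<phi> k \<bullet> e)\<^sup>2 / dd \<phi> \<mu> k) = 0" unfolding q_eq by (meson not_le order_antisym)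
  moreover have "\<forall>k\<in>{1..N}. 0 \<le> (\<phi> k \<bullet> e)\<^sup>2 / dd \<phi> \<mu> k"
    using dd_ge1[OF mu] by (meson divide_nonneg_pos less_le_trans zero_le_power2 zero_less_one)
  ultimately have z: "\<forall>k\<in>{1..N}. (\<phi> k \<bullet> e)\<^sup>2 / dd \<phi> \<mu> k = 0"
    using sum_nonneg_eq_0_iff[of "{1..N}" "\<lambda>k. (\<phi> k \<bullet> e)\<^sup>2 / dd \<phi> \<mu> k"] by blast
  have "\<forall>k\<in>{1..N}. \<phi> k \<bullet> e = 0"
  proof
    fix k assume "k \<in> {1..N}"
    with z have "(\<phi> k \<bullet> e)\<^sup>2 / dd \<phi> \<mu> k = 0" by auto
    moreover have "dd \<phi> \<mu> k \<noteq> 0" using dd_ge1[OF mu, of \<phi> k] by auto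
    ultimately show "\<phi> k \<bullet> e = 0" by simp
  qed
  then have "orthogonal e e"
  proof (intro orthogonal_to_span[of e "\<phi> ` {1..N}" e])
    show "e \<in> span (\<phi> ` {1..N})" using sp by simp
  next
    fix y assume "\<forall>k\<in>{1..N}. \<phi> k \<bullet> e = 0" "y \<in> \<phi> ` {1..N}"
    then show "orthogonal e y" by (auto simp: orthogonal_def inner_commute)
  qed
  with e show False by (simp add: orthogonal_def)
qed

lemma q_lower:
  assumes sp: "span (\<phi> ` {1..N}) = UNIV" and mu: "\<mu> \<ge> 0"
  shows "\<exists>m>0. \<forall>e. m * (e \<bullet> e) \<le> e \<bullet> GG \<phi> N \<mu> (e::real^'n)"
proof -
  obtain b :: "real^'n" where b: "b \<in> Basis" using nonempty_Basis by blast
  have ne: "sphere (0::real^'n) 1 \<noteq> {}" using b by (auto intro!: exI[of _ b])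
  have "continuous_on (sphere 0 1) (\<lambda>e::real^'n. e \<bullet> GG \<phi> N \<mu> e)"
    unfolding GG_def using dd_nz[OF mu, of \<phi>] by (intro continuous_intros) auto
  from continuous_attains_inf[OF compact_sphere ne this]
  obtain u where u: "u \<in> sphere 0 1" and mn: "\<forall>y\<in>sphere 0 1. u \<bullet> GG \<phi> N \<mu> u \<le> y \<bullet> GG \<phi> N \<mu> y" by blast
  have mpos: "0 < u \<bullet> GG \<phi> N \<mu> u" using u by (intro q_pos[OF sp mu]) auto
  show ?thesis
  proof (intro exI conjI allI)
    show "0 < u \<bullet> GG \<phi> N \<mu> u" by (rule mpos)
    fix e :: "real^'n"
    show "(u \<bullet> GG \<phi> N \<mu> u) * (e \<bullet> e) \<le> e \<bullet> GG \<phi> N \<mu> e"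
    proof (cases "e = 0")
      case True then show ?thesis by simp
    next
      case False
      define w where "w = (1 / norm e) *\<^sub>R e"
      have w: "w \<in> sphere 0 1" using False by (simp add: w_def)
      have ew: "e = norm e *\<^sub>R w" using False by (simp add: w_def)
      have "e \<bullet> GG \<phi> N \<mu> e = (norm e)\<^sup>2 * (w \<bullet> GG \<phi> N \<mu> w)"
        by (subst (1 2) ew) (simp add: GG_scale power2_eq_square)
      also have "\<dots> \<ge> (norm e)\<^sup>2 * (u \<bullet> GG \<phi> N \<mu> u)"
        using mn w by (intro mult_left_mono) auto
      finally show ?thesis by (simp add: power2_norm_eq_inner mult.commute)
    qed
  qed
qed

lemma ineq1:
  fixes \<beta> \<gamma> m c qE EW a2 b2 :: real
  assumes "\<beta>>0" "\<gamma>>0" "m>0" "c>0" "c\<le>\<gamma>*m" "c\<le>\<beta>" "m*a2 \<le> qE" "2*\<bar>EW\<bar> \<le> a2+b2" "a2\<ge>0" "b2\<ge>0"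
  shows "-2*\<beta>*\<gamma>*qE + c*\<gamma>*qE + c*\<beta>*EW - c*\<beta>*b2 \<le> -(c*\<beta>/2)*(a2+b2)"
proof -
  have q0: "qE \<ge> 0" using assms by (meson mult_nonneg_nonneg order_trans less_imp_le)
  have 1: "(\<beta> - c)*\<gamma>*qE \<ge> 0" using assms q0 by simp
  have 2: "\<beta>*\<gamma>*qE \<ge> \<beta>*(\<gamma>*m)*a2" using assms by (simp add: mult_left_mono mult.assoc)
  have 3: "\<beta>*(\<gamma>*m)*a2 \<ge> \<beta>*c*a2" using assms by (simp add: mult_left_mono mult_right_mono)
  have 4: "c*\<beta>*EW \<le> c*\<beta>*((a2+b2)/2)" using assms by (intro mult_left_mono) auto
  have 5: "c*\<gamma>*qE \<le> \<beta>*\<gamma>*qE" using 1 by (simp add: algebra_simps)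
  have 6: "\<beta>*c*a2 = c*\<beta>*a2" by simp
  show ?thesis using 2 3 4 5 6 by (simp add: field_simps)
qed

lemma ineq2:
  fixes \<beta> \<gamma> m c qE EW a2 b2 :: real
  assumes "\<beta>>0" "\<gamma>>0" "c>0" "L\<ge>0" "qE \<le> L*a2" "2*\<bar>EW\<bar> \<le> a2+b2" "a2\<ge>0" "b2\<ge>0"
  shows "\<gamma>*qE + \<beta>*b2 - c*EW \<le> (\<gamma>*L+\<beta>+c)*(a2+b2)"
proof -
  have 1: "\<gamma>*qE \<le> \<gamma>*(L*a2)" using assms by (simp add: mult_left_mono)
  have 2: "- EW \<le> (a2+b2)/2" using assms by (simp add: abs_le_iff)
  have 2: "c * (- EW) \<le> c*((a2+b2)/2)" using 2 assms by (intro mult_left_mono) auto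
  have 3: "L*a2 \<le> L*(a2+b2)" using assms by (intro mult_left_mono) auto
  have 3: "\<gamma>*(L*a2) \<le> \<gamma>*(L*(a2+b2))" using 3 assms by (intro mult_left_mono) auto
  have 4: "\<beta>*b2 \<le> \<beta>*(a2+b2)" using assms by (intro mult_left_mono) auto
  have 5: "c*((a2+b2)/2) \<le> c*(a2+b2)" using assms by (intro mult_left_mono) auto
  show ?thesis using 1 2 3 4 5 by (simp add: algebra_simps)
qed

lemma ineq3:
  fixes \<beta> \<gamma> m c qE EW a2 b2 :: real
  assumes "\<beta>>0" "\<gamma>>0" "m>0" "c>0" "c\<le>\<gamma>*m" "c\<le>\<beta>" "m*a2 \<le> qE" "2*\<bar>EW\<bar> \<le> a2+b2" "a2\<ge>0" "b2\<ge>0"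
  shows "(c/2)*(a2+b2) \<le> \<gamma>*qE + \<beta>*b2 - c*EW"
proof -
  have 1: "\<gamma>*(m*a2) \<le> \<gamma>*qE" using assms by (intro mult_left_mono) auto
  have 1: "c*a2 \<le> \<gamma>*qE" using 1 assms by (smt (verit) mult.assoc mult_right_mono)
  have 2: "c*b2 \<le> \<beta>*b2" using assms by (intro mult_right_mono) auto
  have 3: "EW \<le> (a2+b2)/2" using assms by (simp add: abs_le_iff)
  have 3: "c * EW \<le> c*((a2+b2)/2)" using 3 assms by (intro mult_left_mono) auto
  have 4: "c*EW \<le> (c*a2 + c*b2)/2" using 3 by (simp add: algebra_simps)
  have 5: "(c/2)*(a2+b2) = (c*a2 + c*b2)/2" by (simp add: algebra_simps)
  show ?thesis unfolding 5 using 1 2 4 by (simp add: mult.commute)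
qed

lemma inner_vd:
  assumes "(f has_vector_derivative f') (at t within S)" "(g has_vector_derivative g') (at t within S)"
  shows "((\<lambda>s. f s \<bullet> g s) has_real_derivative (f t \<bullet> g' + f' \<bullet> g t)) (at t within S)"
proof -
  have "((\<lambda>s. f s \<bullet> g s) has_derivative (\<lambda>h. f t \<bullet> (h *\<^sub>R g') + (h *\<^sub>R f') \<bullet> g t)) (at t within S)"
    using assms unfolding has_vector_derivative_def by (rule has_derivative_inner)
  moreover have "(\<lambda>h. f t \<bullet> (h *\<^sub>R g') + (h *\<^sub>R f') \<bullet> g t) = (*) (f t \<bullet> g' + f' \<bullet> g t)"
    by (auto simp: algebra_simps)
  ultimately show ?thesis unfolding has_field_derivative_def by simp
qed

lemma vd_fst:
  assumes "(x has_vector_derivative D) F"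
  shows "((\<lambda>t. fst (x t) - c) has_vector_derivative fst D) F"
proof -
  have "((\<lambda>t. fst (x t)) has_derivative (\<lambda>h. fst (h *\<^sub>R D))) F"
    using assms unfolding has_vector_derivative_def by (rule has_derivative_fst)
  then have "((\<lambda>t. fst (x t)) has_vector_derivative fst D) F"
    unfolding has_vector_derivative_def by simp
  from has_vector_derivative_diff[OF this has_vector_derivative_const[of c]] show ?thesis by simp
qed

lemma vd_snd:
  assumes "(x has_vector_derivative D) F"
  shows "((\<lambda>t. snd (x t) - c) has_vector_derivative snd D) F"
proof -
  have "((\<lambda>t. snd (x t)) has_derivative (\<lambda>h. snd (h *\<^sub>R D))) F"
    using assms unfolding has_vector_derivative_def by (rule has_derivative_snd)
  then have "((\<lambda>t. snd (x t)) has_vector_derivative snd D) F"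
    unfolding has_vector_derivative_def by simp
  from has_vector_derivative_diff[OF this has_vector_derivative_const[of c]] show ?thesis by simp
qed


theorem theorem5:
  fixes \<theta>s :: "real^'n" and \<phi> :: "nat \<Rightarrow> real^'n" and N :: nat
    and \<beta> \<gamma> \<mu> :: real
  assumes "dim (\<phi> ` {1..N}) = CARD('n)"
    and "\<beta> > 0" and "\<gamma> > 0" and "\<mu> \<ge> 0"
  shows "UGAS (\<lambda>t (\<theta>, \<theta>v). (- \<beta> *\<^sub>R (\<theta> - \<theta>v), - \<gamma> *\<^sub>R Bfun \<phi> N \<theta>s \<theta> \<mu>)) (\<theta>s, \<theta>s)"
proof -
  have bp: "\<beta> > 0" and gp: "\<gamma> > 0" and mu: "\<mu> \<ge> 0" using assms by auto
  have "dim (\<phi> ` {1..N}) = DIM(real^'n)" using assms(1) by simp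
  then have sp: "span (\<phi> ` {1..N}) = UNIV" using dim_eq_full by blast
  obtain m where m: "m > 0" "\<And>e. m * (e \<bullet> e) \<le> e \<bullet> GG \<phi> N \<mu> e" using q_lower[OF sp mu] by blast
  define L where "L = (\<Sum>k=1..N. \<phi> k \<bullet> \<phi> k)"
  have L0: "L \<ge> 0" by (simp add: L_def sum_nonneg)
  have Lq: "\<And>e. e \<bullet> GG \<phi> N \<mu> e \<le> L * (e \<bullet> e)" unfolding L_def by (rule q_upper[OF mu])
  define c where "c = min (\<gamma> * m) \<beta>"
  have c: "c > 0" "c \<le> \<gamma> * m" "c \<le> \<beta>" using m bp gp by (auto simp: c_def)
  define Bc where "Bc = \<gamma> * L + \<beta> + c"
  have Bc: "Bc > 0" unfolding Bc_def using mult_nonneg_nonneg[of \<gamma> L] L0 gp bp c by linarith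
  define \<alpha> where "\<alpha> = c * \<beta> / (2 * Bc)"
  have \<alpha>: "\<alpha> > 0" using c bp Bc by (simp add: \<alpha>_def)
  define K where "K = 2 * Bc / c"
  have K: "K > 0" using Bc c by (simp add: K_def)
  let ?f = "(\<lambda>t (\<theta>, \<theta>v). (- \<beta> *\<^sub>R (\<theta> - \<theta>v), - \<gamma> *\<^sub>R Bfun \<phi> N \<theta>s \<theta> \<mu>)) :: real \<Rightarrow> _"
  have bound: "norm (x t - (\<theta>s, \<theta>s)) \<le> sqrt K * norm (x0 - (\<theta>s, \<theta>s)) * exp (- (\<alpha>/2) * (t - t0))"
    if sol: "is_solution ?f t0 x0 x" and t: "t \<ge> t0" for t0 x0 x t
  proof -
    define E where "E s = fst (x s) - \<theta>s" for s
    define W where "W s = snd (x s) - \<theta>s" for s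
    define Q where "Q s = (\<Sum>k\<in>{1..N}. (\<phi> k \<bullet> E s) * (\<phi> k \<bullet> E s) / dd \<phi> \<mu> k)" for s
    define V where "V s = \<gamma> * Q s + \<beta> * (W s \<bullet> W s) - c * (E s \<bullet> W s)" for s
    define E' where "E' s = - \<beta> *\<^sub>R (E s - W s)" for s
    define W' where "W' s = - \<gamma> *\<^sub>R GG \<phi> N \<mu> (E s)" for s
    define V' where "V' s = -2*\<beta>*\<gamma>*(E s \<bullet> GG \<phi> N \<mu> (E s)) + c*\<gamma>*(E s \<bullet> GG \<phi> N \<mu> (E s))
        + c*\<beta>*(E s \<bullet> W s) - c*\<beta>*(W s \<bullet> W s)" for s
    define S where "S s = E s \<bullet> E s + W s \<bullet> W s" for s
    have xd: "(x has_vector_derivative (E' s, W' s)) (at s within {t0..})" if "s \<ge> t0" for s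
    proof -
      have "(x has_vector_derivative ?f s (x s)) (at s within {t0..})"
        using sol that unfolding is_solution_def by blast
      moreover have "?f s (x s) = (E' s, W' s)"
        by (simp add: split_beta E'_def W'_def E_def W_def Bfun_GG)
      ultimately show ?thesis by simp
    qed
    have Ed: "(E has_vector_derivative E' s) (at s within {t0..})" if "s \<ge> t0" for s
      using vd_fst[OF xd[OF that], of \<theta>s] unfolding E_def[abs_def] by simp
    have Wd: "(W has_vector_derivative W' s) (at s within {t0..})" if "s \<ge> t0" for s
      using vd_snd[OF xd[OF that], of \<theta>s] unfolding W_def[abs_def] by simp
    have Qd: "(Q has_real_derivative 2 * (E' s \<bullet> GG \<phi> N \<mu> (E s))) (at s within {t0..})" if "s \<ge> t0" for s
      unfolding Q_def[abs_def]
      apply (rule DERIV_cong)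
       apply (rule DERIV_sum)
       apply (rule DERIV_cdivide)
       apply (rule DERIV_mult)
        apply (rule inner_vd)
         apply (rule has_vector_derivative_const)
        apply (rule Ed[OF that])
       apply (rule inner_vd)
        apply (rule has_vector_derivative_const)
       apply (rule Ed[OF that])
      apply (simp add: inner_GG sum_distrib_left mult.commute flip: sum_divide_distrib)
      done
    have Vd: "(V has_real_derivative V' s) (at s within {t0..})" if "s \<ge> t0" for s
      unfolding V_def[abs_def]
      apply (rule DERIV_cong)
       apply (rule DERIV_diff)
        apply (rule DERIV_add)
         apply (rule DERIV_cmult)
         apply (rule Qd[OF that])
        apply (rule DERIV_cmult)
        apply (rule inner_vd)
         apply (rule Wd[OF that])
        apply (rule Wd[OF that])
       apply (rule DERIV_cmult)
       apply (rule inner_vd)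
        apply (rule Ed[OF that])
       apply (rule Wd[OF that])
    proof -
      let ?g = "GG \<phi> N \<mu> (E s)"
      have e1: "E' s \<bullet> ?g = -\<beta>*(E s \<bullet> ?g) + \<beta>*(W s \<bullet> ?g)" by (simp add: E'_def inner_diff_left algebra_simps)
      have e2: "W s \<bullet> W' s = -\<gamma>*(W s \<bullet> ?g)" by (simp add: W'_def)
      have e3: "W' s \<bullet> W s = -\<gamma>*(W s \<bullet> ?g)" by (simp add: W'_def inner_commute)
      have e4: "E s \<bullet> W' s = -\<gamma>*(E s \<bullet> ?g)" by (simp add: W'_def)
      have e5: "E' s \<bullet> W s = -\<beta>*(E s \<bullet> W s) + \<beta>*(W s \<bullet> W s)" by (simp add: E'_def inner_diff_left algebra_simps)
      show "\<gamma> * (2 * (E' s \<bullet> ?g)) + \<beta> * (W s \<bullet> W' s + W' s \<bullet> W s) - c * (E s \<bullet> W' s + E' s \<bullet> W s) = V' s"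
        unfolding e1 e2 e3 e4 e5 V'_def by (simp add: algebra_simps)
    qed
    have facts: "m * (E s \<bullet> E s) \<le> E s \<bullet> GG \<phi> N \<mu> (E s)" "E s \<bullet> GG \<phi> N \<mu> (E s) \<le> L * (E s \<bullet> E s)"
        "2 * \<bar>E s \<bullet> W s\<bar> \<le> E s \<bullet> E s + W s \<bullet> W s" "E s \<bullet> E s \<ge> 0" "W s \<bullet> W s \<ge> 0"
        "V s = \<gamma> * (E s \<bullet> GG \<phi> N \<mu> (E s)) + \<beta> * (W s \<bullet> W s) - c * (E s \<bullet> W s)" for s
    proof -
      show "m * (E s \<bullet> E s) \<le> E s \<bullet> GG \<phi> N \<mu> (E s)" by (rule m(2))
      show "E s \<bullet> GG \<phi> N \<mu> (E s) \<le> L * (E s \<bullet> E s)" by (rule Lq)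
      show "E s \<bullet> E s \<ge> 0" "W s \<bullet> W s \<ge> 0" by auto
      have 1: "0 \<le> (E s - W s) \<bullet> (E s - W s)" "0 \<le> (E s + W s) \<bullet> (E s + W s)" by auto
      then show "2 * \<bar>E s \<bullet> W s\<bar> \<le> E s \<bullet> E s + W s \<bullet> W s"
        by (simp add: inner_diff_left inner_diff_right inner_add_left inner_add_right inner_commute abs_le_iff)
      show "V s = \<gamma> * (E s \<bullet> GG \<phi> N \<mu> (E s)) + \<beta> * (W s \<bullet> W s) - c * (E s \<bullet> W s)"
        by (simp add: V_def Q_def q_eq power2_eq_square)
    qed
    have Vle: "V' s \<le> - \<alpha> * V s" if "s \<ge> t0" for s
    proof -
      have 1: "V' s \<le> -(c*\<beta>/2) * S s"
        unfolding V'_def S_def by (rule ineq1[OF bp gp m(1) c facts(1) facts(3-5)])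
      have 2: "V s \<le> Bc * S s"
        unfolding facts(6) S_def Bc_def by (rule ineq2[OF bp gp c(1) L0 facts(2-5)])
      have "-(c*\<beta>/2) * S s \<le> -(c*\<beta>/2) * (V s / Bc)"
        using 2 Bc c bp by (intro mult_left_mono_neg) (auto simp: divide_le_eq mult.commute)
      also have "\<dots> = - \<alpha> * V s" by (simp add: \<alpha>_def)
      finally show ?thesis using 1 by linarith
    qed
    have dec: "V t \<le> V t0 * exp (- \<alpha> * (t - t0))"
      by (rule decay[OF Vd Vle t])
    have St: "(c/2) * S t \<le> V t"
      unfolding facts(6) S_def by (rule ineq3[OF bp gp m(1) c facts(1) facts(3-5)])
    have S0: "V t0 \<le> Bc * S t0"
      unfolding facts(6) S_def Bc_def by (rule ineq2[OF bp gp c(1) L0 facts(2-5)])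
    have "(c/2) * S t \<le> Bc * S t0 * exp (- \<alpha> * (t - t0))"
    proof -
      have "V t0 * exp (- \<alpha> * (t - t0)) \<le> Bc * S t0 * exp (- \<alpha> * (t - t0))"
        using S0 by (intro mult_right_mono) auto
      then show ?thesis using St dec by linarith
    qed
    then have SK: "S t \<le> K * S t0 * exp (- \<alpha> * (t - t0))"
      using c by (simp add: K_def field_simps)
    have nS: "(norm (x s - (\<theta>s, \<theta>s)))\<^sup>2 = S s" for s
    proof -
      have "x s - (\<theta>s, \<theta>s) = (E s, W s)" by (simp add: E_def W_def prod_eq_iff)
      then show ?thesis by (simp add: norm_Pair S_def power2_norm_eq_inner)
    qed
    have x0: "x t0 = x0" using sol by (simp add: is_solution_def)
    have ex: "exp (- \<alpha> * (t - t0)) = (exp (- (\<alpha>/2) * (t - t0)))\<^sup>2"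
      by (simp add: power2_eq_square flip: exp_add)
    have "(norm (x t - (\<theta>s, \<theta>s)))\<^sup>2 \<le> (sqrt K * norm (x0 - (\<theta>s, \<theta>s)) * exp (- (\<alpha>/2) * (t - t0)))\<^sup>2"
      using SK K unfolding nS[symmetric] x0 ex by (simp add: power_mult_distrib)
    then show ?thesis
      by (rule power2_le_imp_le) (use K in auto)
  qed
  show ?thesis
    by (rule UGAS_from_bound[of "sqrt K" "\<alpha>/2"]) (use K \<alpha> bound in auto)
qed

end
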